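(* Consider the FlexPD-F iterates described in the context with $\beta>0$, integer $T\ge1$ and $U=I-\alpha B$. Let $0<\eta_1<2m$. If $0<\alpha<\frac{1}{L^2/\eta_1+\rho(B)}$ and $0<\beta<\frac{2m-\eta_1}{\rho(A'A)}$, then there exists $\delta_F>0$ such that for all $k\ge0$, \[\|x^{k+1,T}-x^*\|_U^2+\frac{\alpha}{\beta}\|\lambda^{k+1}-\lambda^*\|^2\le\frac{1}{1+\delta_F}\Big(\|x^{k+1,T-1}-x^*\|_U^2+\frac{\alpha}{\beta}\|\lambda^k-\lambda^*\|^2\Big).\]
   Context: Setting: $n$ agents are connected by a connected undirected graph with edge set $\mathcal E$, $\epsilon=|\mathcal E|$. For $x\in\mathbb R^n$ let $f(x)=\sum_{i=1}^n f_i(x_i)$, where each $f_i:\mathbb R\to\mathbb R$ is twice differentiable with $m\le f_i''\le L$ for constants $0<m\le L$; $\nabla f(x)=(f_1'(x_1),\dots,f_n'(x_n))'$. $A\in\mathbb R^{\epsilon\times n}$ is the edge–node incidence matrix (null space spanned by the all-ones vector). $B\in\mathbb R^{n\times n}$ is symmetric positive semidefinite with the same null space as $A$, off-diagonal entries nonzero only on edges. $x^*$ is the unique minimizer of $f$ subject to $Ax=0$ and $\lambda^*$ a Lagrange multiplier with $\nabla f(x^* )+A'\lambda^*=0$, $Ax^*=0$, $Bx^*=0$, chosen in the column space of $A$. FlexPD-F: given $\alpha,\beta>0$, $T\ge1$, $x^0$ arbitrary, $\lambda^0=0$; for $k\ge0$: $x^{k+1,0}=x^k$, $x^{k+1,t}=(I-\alpha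 B)x^{k+1,t-1}-\alpha\nabla f(x^{k+1,t-1})-\alpha A'\lambda^k$ for $t=1,\dots,T$, $x^{k+1}=x^{k+1,T}$, $\lambda^{k+1}=\lambda^k+\beta Ax^{k+1}$. Notation: $\rho(S)$ largest eigenvalue of symmetric $S$; $\|v\|_S^2=v'Sv$; $\|\cdot\|$ Euclidean norm. *)

theory Defs
  imports "HOL-Analysis.Analysis"
begin

text \<open>Graph given by edges of type 'e with endpoints src e, dst e (an arbitrary orientation).\<close>

definition adjacent :: "('e \<Rightarrow> 'n) \<Rightarrow> ('e \<Rightarrow> 'n) \<Rightarrow> 'n \<Rightarrow> 'n \<Rightarrow> bool" where
  "adjacent src dst i j \<longleftrightarrow> (\<exists>e. (src e = i \<and> dst e = j) \<or> (src e = j \<and> dst e = i))"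

definition simple_connected_graph :: "('e \<Rightarrow> 'n) \<Rightarrow> ('e \<Rightarrow> 'n) \<Rightarrow> bool" where
  "simple_connected_graph src dst \<longleftrightarrow>
     (\<forall>e. src e \<noteq> dst e) \<and>
     (\<forall>e e'. {src e, dst e} = {src e', dst e'} \<longrightarrow> e = e') \<and>
     (\<forall>i j. (adjacent src dst)\<^sup>*\<^sup>* i j)"

text \<open>Edge-node incidence matrix: row e has +1 at src e, -1 at dst e.\<close>
definition incidence_matrix :: "('e \<Rightarrow> 'n) \<Rightarrow> ('e \<Rightarrow> 'n) \<Rightarrow> real^'n^'e" where
  "incidence_matrix src dst = (\<chi> e i. if i = src e then 1 else if i = dst e then -1 else 0)"

text \<open>Largest eigenvalue of a (symmetric) matrix.\<close>
definition largest_eig :: "real^'n^'n \<Rightarrow> real" where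
  "largest_eig S = Max {\<mu>. \<exists>v. v \<noteq> 0 \<and> S *v v = \<mu> *\<^sub>R v}"

definition psd :: "real^'n^'n \<Rightarrow> bool" where
  "psd S \<longleftrightarrow> (\<forall>v. 0 \<le> v \<bullet> (S *v v))"

text \<open>Weighted squared norm \<parallel>v\<parallel>_S^2 = v' S v.\<close>
definition wnorm_sq :: "real^'n^'n \<Rightarrow> real^'n \<Rightarrow> real" where
  "wnorm_sq S v = v \<bullet> (S *v v)"

text \<open>Gradient of f(x) = \<Sum> i. f_i(x_i), given derivatives df i of f i.\<close>
definition grad :: "('n \<Rightarrow> real \<Rightarrow> real) \<Rightarrow> real^'n \<Rightarrow> real^'n" where
  "grad df x = (\<chi> i. df i (x $ i))"

text \<open>One inner primal step of FlexPD-F with fixed multiplier lam.\<close>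
definition inner_step :: "real \<Rightarrow> real^'n^'n \<Rightarrow> ('n \<Rightarrow> real \<Rightarrow> real) \<Rightarrow> real^'n^'e
     \<Rightarrow> real^'e \<Rightarrow> real^'n \<Rightarrow> real^'n" where
  "inner_step \<alpha> B df A lam x =
     (mat 1 - \<alpha> *\<^sub>R B) *v x - \<alpha> *\<^sub>R grad df x - \<alpha> *\<^sub>R (transpose A *v lam)"

text \<open>FlexPD-F outer iterates (x^k, lambda^k), with lambda^0 = 0.\<close>
primrec flexpd :: "real \<Rightarrow> real \<Rightarrow> nat \<Rightarrow> real^'n^'n \<Rightarrow> ('n \<Rightarrow> real \<Rightarrow> real) \<Rightarrow> real^'n^'e
     \<Rightarrow> real^'n \<Rightarrow> nat \<Rightarrow> (real^'n) \<times> (real^'e)" where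
  "flexpd \<alpha> \<beta> T B df A x0 0 = (x0, 0)"
| "flexpd \<alpha> \<beta> T B df A x0 (Suc k) =
     (let xk = fst (flexpd \<alpha> \<beta> T B df A x0 k);
          lk = snd (flexpd \<alpha> \<beta> T B df A x0 k);
          x' = (inner_step \<alpha> B df A lk ^^ T) xk
      in (x', lk + \<beta> *\<^sub>R (A *v x')))"

text \<open>Inner iterate x^{k+1,t}.\<close>
definition flexpd_inner :: "real \<Rightarrow> real \<Rightarrow> nat \<Rightarrow> real^'n^'n \<Rightarrow> ('n \<Rightarrow> real \<Rightarrow> real) \<Rightarrow> real^'n^'e
     \<Rightarrow> real^'n \<Rightarrow> nat \<Rightarrow> nat \<Rightarrow> real^'n" where
  "flexpd_inner \<alpha> \<beta> T B df A x0 k t =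
     (inner_step \<alpha> B df A (snd (flexpd \<alpha> \<beta> T B df A x0 k)) ^^ t) (fst (flexpd \<alpha> \<beta> T B df A x0 k))"

end

theory Submission
  imports Defs
begin

lemma sym_inner:
  fixes M :: "real^'n^'n"
  assumes "transpose M = M" shows "x \<bullet> (M *v y) = y \<bullet> (M *v x)"
  by (metis assms dot_lmul_matrix transpose_matrix_vector inner_commute)

lemma transp_inner:
  fixes A :: "real^'n^'m"
  shows "x \<bullet> (A *v y) = (transpose A *v x) \<bullet> y"
  by (simp add: dot_lmul_matrix)

lemma quad_scale:
  fixes S :: "real^'n^'n"
  shows "(c *\<^sub>R v) \<bullet> (S *v (c *\<^sub>R v)) = c^2 * (v \<bullet> (S *v v))"
  by (simp add: matrix_vector_mult_scaleR power2_eq_square)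

lemma rayleigh_attain:
  fixes S :: "real^'n^'n"
  shows "\<exists>w. norm w = 1 \<and> (\<forall>v. v \<bullet> (S *v v) \<le> (w \<bullet> (S *v w)) * (norm v)^2)"
proof -
  have ne: "sphere (0::real^'n) 1 \<noteq> {}"
    using norm_axis_1 by (metis dist_0_norm empty_iff mem_sphere)
  have cont: "continuous_on (sphere (0::real^'n) 1) (\<lambda>v. v \<bullet> (S *v v))"
    by (intro continuous_intros linear_continuous_on) (auto intro: linear_linear[THEN iffD1] matrix_vector_mul_linear)
  obtain w where w: "w \<in> sphere 0 1" "\<And>y. y \<in> sphere 0 1 \<Longrightarrow> y \<bullet> (S *v y) \<le> w \<bullet> (S *v w)"
    using continuous_attains_sup[OF compact_sphere ne cont] by blast
  have "v \<bullet> (S *v v) \<le> (w \<bullet> (S *v w)) * (norm v)^2" for v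
  proof (cases "v = 0")
    case True then show ?thesis by simp
  next
    case False
    have "(inverse (norm v) *\<^sub>R v) \<in> sphere 0 1" using False by simp
    from w(2)[OF this] have "(inverse (norm v))^2 * (v \<bullet> (S *v v)) \<le> w \<bullet> (S *v w)"
      by (simp only: quad_scale)
    then have "(norm v)^2 * ((inverse (norm v))^2 * (v \<bullet> (S *v v))) \<le> (norm v)^2 * (w \<bullet> (S *v w))"
      by (simp add: mult_left_mono)
    then show ?thesis using False by (simp add: power2_eq_square field_simps)
  qed
  then show ?thesis using w(1) by auto
qed

lemma rayleigh_eig:
  fixes S :: "real^'n^'n"
  assumes sym: "transpose S = S" and nw: "norm w = 1"
    and bnd: "\<And>v. v \<bullet> (S *v v) \<le> (w \<bullet> (S *v w)) * (norm v)^2"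
  shows "S *v w = (w \<bullet> (S *v w)) *\<^sub>R w"
proof (rule ccontr)
  define R where "R = w \<bullet> (S *v w)"
  define z where "z = S *v w - R *\<^sub>R w"
  assume "S *v w \<noteq> (w \<bullet> (S *v w)) *\<^sub>R w"
  then have zne: "z \<noteq> 0" unfolding z_def R_def by simp
  define a where "a = z \<bullet> z"
  have apos: "a > 0" using zne unfolding a_def by simp
  define q where "q = \<bar>z \<bullet> (S *v z) - R * (z \<bullet> z)\<bar>"
  have ww: "w \<bullet> w = 1" using nw by (simp add: dot_square_norm)
  have zSw: "z \<bullet> (S *v w) - R * (w \<bullet> z) = a"
    unfolding a_def z_def by (simp add: inner_diff_left inner_diff_right inner_commute algebra_simps)
  have key: "2 * t * a + t^2 * (z \<bullet> (S *v z) - R * (z \<bullet> z)) \<le> 0" for t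
  proof -
    have "(w + t *\<^sub>R z) \<bullet> (S *v (w + t *\<^sub>R z)) \<le> R * (norm (w + t *\<^sub>R z))^2"
      using bnd unfolding R_def by blast
    moreover have "(w + t *\<^sub>R z) \<bullet> (S *v (w + t *\<^sub>R z)) = R + 2 * t * (z \<bullet> (S *v w)) + t^2 * (z \<bullet> (S *v z))"
      using sym_inner[OF sym, of w z]
      by (simp add: R_def matrix_vector_right_distrib matrix_vector_mult_scaleR inner_add_left inner_add_right power2_eq_square algebra_simps)
    moreover have "(norm (w + t *\<^sub>R z))^2 = 1 + 2 * t * (w \<bullet> z) + t^2 * (z \<bullet> z)"
      using ww inner_commute[of z w] unfolding power2_norm_eq_inner by (simp add: inner_add_left inner_add_right power2_eq_square algebra_simps)
    ultimately show ?thesis using zSw by (simp add: algebra_simps power2_eq_square)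
  qed
  define t where "t = a / (q + 1)"
  have tpos: "t > 0" using apos unfolding t_def q_def by simp
  have "- (z \<bullet> (S *v z) - R * (z \<bullet> z)) \<le> q" unfolding q_def by linarith
  then have "t^2 * (- (z \<bullet> (S *v z) - R * (z \<bullet> z))) \<le> t^2 * q"
    by (rule mult_left_mono) simp
  then have "2 * t * a \<le> t^2 * q"
    using key[of t] by (simp add: algebra_simps)
  then have "2 * a \<le> t * q" using tpos by (simp add: power2_eq_square)
  moreover have "t * q < a" using apos unfolding t_def q_def
    by (simp add: field_simps)
  ultimately show False using apos by simp
qed

lemma eig_finite:
  fixes S :: "real^'n^'n"
  assumes sym: "transpose S = S"
  shows "finite {\<mu>. \<exists>v. v \<noteq> 0 \<and> S *v v = \<mu> *\<^sub>R v}"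
proof -
  define E where "E = {\<mu>. \<exists>v. v \<noteq> 0 \<and> S *v v = \<mu> *\<^sub>R v}"
  define ev where "ev \<mu> = (SOME v. v \<noteq> 0 \<and> S *v v = \<mu> *\<^sub>R v)" for \<mu>
  have evp: "ev \<mu> \<noteq> 0 \<and> S *v ev \<mu> = \<mu> *\<^sub>R ev \<mu>" if "\<mu> \<in> E" for \<mu>
    using that unfolding E_def ev_def by (metis (mono_tags, lifting) mem_Collect_eq someI_ex)
  have orth: "ev \<mu> \<bullet> ev \<nu> = 0" if "\<mu> \<in> E" "\<nu> \<in> E" "\<mu> \<noteq> \<nu>" for \<mu> \<nu>
  proof -
    have "\<mu> * (ev \<mu> \<bullet> ev \<nu>) = ev \<nu> \<bullet> (S *v ev \<mu>)"
      using evp[OF that(1)] by (simp add: inner_commute)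
    also have "\<dots> = ev \<mu> \<bullet> (S *v ev \<nu>)" using sym_inner[OF sym] by metis
    also have "\<dots> = \<nu> * (ev \<mu> \<bullet> ev \<nu>)" using evp[OF that(2)] by simp
    finally show ?thesis using that(3) by simp
  qed
  have inj: "inj_on ev E"
  proof (rule inj_onI)
    fix \<mu> \<nu> assume h: "\<mu> \<in> E" "\<nu> \<in> E" "ev \<mu> = ev \<nu>"
    show "\<mu> = \<nu>"
    proof (rule ccontr)
      assume "\<mu> \<noteq> \<nu>"
      then have "ev \<mu> \<bullet> ev \<mu> = 0" using orth[OF h(1,2)] h(3) by simp
      then show False using evp[OF h(1)] by simp
    qed
  qed
  have "pairwise orthogonal (ev ` E)"
    unfolding pairwise_def orthogonal_def using orth by blast
  moreover have "0 \<notin> ev ` E" using evp by fastforce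
  ultimately have "independent (ev ` E)" by (rule pairwise_orthogonal_independent)
  then have "finite (ev ` E)" by (rule finiteI_independent)
  then have "finite E" using inj finite_imageD by blast
  then show ?thesis unfolding E_def .
qed

lemma largest_eig_bound:
  fixes S :: "real^'n^'n"
  assumes sym: "transpose S = S"
  shows "v \<bullet> (S *v v) \<le> largest_eig S * (norm v)^2"
proof -
  obtain w where nw: "norm w = 1" and bnd: "\<And>v. v \<bullet> (S *v v) \<le> (w \<bullet> (S *v w)) * (norm v)^2"
    using rayleigh_attain[of S] by blast
  define R where "R = w \<bullet> (S *v w)"
  have eig: "S *v w = R *\<^sub>R w" using rayleigh_eig[OF sym nw bnd] unfolding R_def .
  have "largest_eig S = R"
    unfolding largest_eig_def
  proof (rule Max_eqI)
    show "finite {\<mu>. \<exists>v. v \<noteq> 0 \<and> S *v v = \<mu> *\<^sub>R v}" by (rule eig_finite[OF sym])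
  next
    fix \<mu> assume "\<mu> \<in> {\<mu>. \<exists>v. v \<noteq> 0 \<and> S *v v = \<mu> *\<^sub>R v}"
    then obtain v where v: "v \<noteq> 0" "S *v v = \<mu> *\<^sub>R v" by blast
    have "\<mu> * (norm v)^2 = v \<bullet> (S *v v)" using v(2) by (simp add: power2_norm_eq_inner)
    also have "\<dots> \<le> R * (norm v)^2" using bnd unfolding R_def .
    finally show "\<mu> \<le> R" using v(1) by simp
  next
    show "R \<in> {\<mu>. \<exists>v. v \<noteq> 0 \<and> S *v v = \<mu> *\<^sub>R v}" using eig nw by (auto intro!: exI[of _ w])
  qed
  then show ?thesis using bnd R_def by simp
qed

lemma mvt_coef:
  fixes h h' :: "real \<Rightarrow> real"
  assumes der: "\<And>t. (h has_real_derivative h' t) (at t)"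
    and bnd: "\<And>t. m \<le> h' t \<and> h' t \<le> L" and mL: "m \<le> L"
  shows "\<exists>c. m \<le> c \<and> c \<le> L \<and> h a - h b = c * (a - b)"
proof (cases a b rule: linorder_cases)
  case less
  obtain z where "h b - h a = (b - a) * h' z" using MVT2[OF less, of h h'] der by blast
  then show ?thesis using bnd[of z] by (intro exI[of _ "h' z"]) (auto simp: algebra_simps)
next
  case equal then show ?thesis using mL by auto
next
  case greater
  obtain z where "h a - h b = (a - b) * h' z" using MVT2[OF greater, of h h'] der by blast
  then show ?thesis using bnd[of z] by (intro exI[of _ "h' z"]) (auto simp: algebra_simps)
qed

lemma scalar_key:
  fixes m L c \<eta> u d :: real
  assumes "m \<le> c" "c \<le> L" "0 < \<eta>" "0 \<le> m"
  shows "(2*m - \<eta>) * u^2 - (L^2/\<eta>) * d^2 \<le> 2 * (u * (c * (u - d)))"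
proof -
  have "0 \<le> (c*d - \<eta>*u)^2 + (L^2 - c^2) * d^2 + 2*\<eta>*(c - m) * u^2"
  proof -
    have "c^2 \<le> L^2" using assms by (intro power_mono) auto
    then show ?thesis using assms by (intro add_nonneg_nonneg mult_nonneg_nonneg) auto
  qed
  also have "\<dots> = \<eta> * (2 * (u * (c * (u - d))) - ((2*m - \<eta>) * u^2 - (L^2/\<eta>) * d^2))"
    using assms by (simp add: field_simps power2_eq_square)
  finally show ?thesis using assms by (simp add: zero_le_mult_iff)
qed

lemma Umul:
  fixes B :: "real^'n^'n"
  shows "(mat 1 - \<alpha> *\<^sub>R B) *v v = v - \<alpha> *\<^sub>R (B *v v)"
  by (simp add: matrix_vector_mult_diff_rdistrib scaleR_matrix_vector_assoc)

lemma wn: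
  fixes B :: "real^'n^'n"
  shows "wnorm_sq (mat 1 - \<alpha> *\<^sub>R B) v = v \<bullet> v - \<alpha> * (v \<bullet> (B *v v))"
  by (simp add: wnorm_sq_def Umul inner_diff_right)

lemma sum_sq_norm: "(norm (v::real^'n))^2 = (\<Sum>i\<in>UNIV. (v$i)^2)"
  unfolding power2_norm_eq_inner by (simp add: inner_vec_def power2_eq_square)

lemma inner_sum: "(u::real^'n) \<bullet> v = (\<Sum>i\<in>UNIV. u$i * v$i)"
  by (simp add: inner_vec_def)

lemma normA_sq:
  fixes A :: "real^'n^'m"
  shows "(norm (A *v v))^2 = v \<bullet> ((transpose A ** A) *v v)"
  by (simp add: power2_norm_eq_inner transp_inner[of "A *v v" A v] matrix_vector_mul_assoc[symmetric] inner_commute)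

lemma alg_id:
  fixes \<alpha> \<beta> nm nm' X Y ee eBe uu uBu eu uBe gu wd :: real
  assumes "\<beta> \<noteq> 0" "nm' = nm + 2*\<beta>*X + \<beta>^2*Y"
    "\<alpha>*X = eu - \<alpha>*uBe - \<alpha>*gu - uu"
    "wd = (uu - 2*eu + ee) - \<alpha>*(uBu - 2*uBe + eBe)"
  shows "(ee - \<alpha>*eBe + \<alpha>/\<beta>*nm) - (uu - \<alpha>*uBu + \<alpha>/\<beta>*nm') = wd + 2*\<alpha>*uBu + 2*\<alpha>*gu - \<alpha>*\<beta>*Y"
proof -
  have "\<alpha>/\<beta>*nm' = \<alpha>/\<beta>*nm + 2*(\<alpha>*X) + \<alpha>*\<beta>*Y"
    using assms(1,2) by (simp add: field_simps power2_eq_square)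
  then show ?thesis using assms(3,4) by (simp add: algebra_simps)
qed

lemma step:
  fixes B :: "real^'n^'n" and A :: "real^'n^'e" and df d2f :: "'n \<Rightarrow> real \<Rightarrow> real"
  assumes df_deriv: "\<And>i t. (df i has_real_derivative d2f i t) (at t)"
    and d2f_bounds: "\<And>i t. m \<le> d2f i t \<and> d2f i t \<le> L" and m_pos: "0 < m" and mL: "m \<le> L"
    and B_sym: "transpose B = B" and B_psd: "psd B"
    and hB: "\<And>v. v \<bullet> (B *v v) \<le> \<rho>B * (norm v)^2"
    and hA: "\<And>v. (norm (A *v v))^2 \<le> \<rho>A * (norm v)^2"
    and KB: "\<And>v. norm (B *v v) \<le> KB * norm v" and KBpos: "0 \<le> KB"
    and KA: "\<And>v. norm ((transpose A ** A) *v v) \<le> KA * norm v" and KApos: "0 \<le> KA"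
    and sig: "\<And>z. \<sigma> * norm (A *v z) \<le> norm (transpose A *v (A *v z))" and sigpos: "0 < \<sigma>"
    and eta: "0 < \<eta>1"
    and alpha: "0 < \<alpha>" "\<alpha> * (L^2/\<eta>1 + \<rho>B) < 1"
    and beta: "0 < \<beta>" "\<beta> * \<rho>A < 2*m - \<eta>1"
    and KKT: "grad df xs + transpose A *v ls = 0" and B_xs: "B *v xs = 0" and xs_feas: "A *v xs = 0"
    and lam: "lam \<in> range (\<lambda>y. A *v y)" and ls: "ls \<in> range (\<lambda>y. A *v y)"
  defines "s \<equiv> min (1/\<alpha> - \<rho>B - L^2/\<eta>1) (2*m - \<eta>1 - \<beta>*\<rho>A)"
    and "M1 \<equiv> 1 + \<alpha>*KB + \<alpha>*L + \<alpha>*\<beta>*KA"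
    and "\<delta> \<equiv> \<alpha> * min (1/\<alpha> - \<rho>B - L^2/\<eta>1) (2*m - \<eta>1 - \<beta>*\<rho>A) / (1 + 2 * (1 + \<alpha>*KB + \<alpha>*L + \<alpha>*\<beta>*KA)^2 / (\<alpha>*\<beta>*\<sigma>^2))"
  shows "wnorm_sq (mat 1 - \<alpha> *\<^sub>R B) (inner_step \<alpha> B df A lam y - xs)
           + \<alpha>/\<beta> * (norm (lam + \<beta> *\<^sub>R (A *v inner_step \<alpha> B df A lam y) - ls))^2
     \<le> 1/(1+\<delta>) * (wnorm_sq (mat 1 - \<alpha> *\<^sub>R B) (y - xs) + \<alpha>/\<beta> * (norm (lam - ls))^2)"
proof -
  have \<delta>_eq: "\<delta> = \<alpha> * s / (1 + 2 * M1^2 / (\<alpha>*\<beta>*\<sigma>^2))" unfolding \<delta>_def s_def M1_def ..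
  define x' where "x' = inner_step \<alpha> B df A lam y"
  define e where "e = y - xs"
  define u where "u = x' - xs"
  define d where "d = u - e"
  define \<mu> where "\<mu> = lam - ls"
  define \<mu>' where "\<mu>' = lam + \<beta> *\<^sub>R (A *v x') - ls"
  define g where "g = grad df y - grad df xs"
  define U where "U = mat 1 - \<alpha> *\<^sub>R B"
  have gx: "grad df xs = - (transpose A *v ls)" using KKT by (simp add: eq_neg_iff_add_eq_0)
  have u_eq: "u = e - \<alpha> *\<^sub>R (B *v e) - \<alpha> *\<^sub>R g - \<alpha> *\<^sub>R (transpose A *v \<mu>)"
    unfolding u_def x'_def inner_step_def e_def g_def \<mu>_def
    by (simp add: Umul matrix_vector_mult_diff_distrib B_xs gx algebra_simps scaleR_matrix_vector_assoc)
  have mu_eq: "\<mu>' = \<mu> + \<beta> *\<^sub>R (A *v u)"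
    unfolding \<mu>'_def \<mu>_def u_def by (simp add: matrix_vector_mult_diff_distrib xs_feas algebra_simps)
  have F1: "(norm \<mu>')^2 = (norm \<mu>)^2 + 2*\<beta>*(\<mu> \<bullet> (A *v u)) + \<beta>^2 * (norm (A *v u))^2"
    unfolding mu_eq power2_norm_eq_inner using inner_commute[of "A *v u" \<mu>]
    by (simp add: inner_add_left inner_add_right power2_eq_square algebra_simps)
  have aAmu: "\<alpha> *\<^sub>R (transpose A *v \<mu>) = - d - \<alpha> *\<^sub>R (B *v e) - \<alpha> *\<^sub>R g"
    unfolding d_def by (subst u_eq) (simp add: algebra_simps)
  have F2: "\<alpha> * (\<mu> \<bullet> (A *v u)) = e \<bullet> u - \<alpha> * (u \<bullet> (B *v e)) - \<alpha> * (g \<bullet> u) - u \<bullet> u"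
  proof -
    have "\<alpha> * (\<mu> \<bullet> (A *v u)) = (\<alpha> *\<^sub>R (transpose A *v \<mu>)) \<bullet> u"
      by (simp add: transp_inner[of \<mu> A u])
    also have "\<dots> = e \<bullet> u - \<alpha> * (u \<bullet> (B *v e)) - \<alpha> * (g \<bullet> u) - u \<bullet> u"
      unfolding aAmu d_def using inner_commute[of e u] inner_commute[of g u] inner_commute[of "B *v e" u] by (simp add: inner_diff_left inner_add_left)
    finally show ?thesis .
  qed
  have F3: "wnorm_sq U d = (u \<bullet> u - 2 * (e \<bullet> u) + e \<bullet> e) - \<alpha> * (u \<bullet> (B *v u) - 2 * (u \<bullet> (B *v e)) + e \<bullet> (B *v e))"
    unfolding U_def wn d_def using sym_inner[OF B_sym, of e u] inner_commute[of e u]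
    by (simp add: matrix_vector_mult_diff_distrib inner_diff_left inner_diff_right algebra_simps)
  define V where "V = wnorm_sq U e + \<alpha>/\<beta> * (norm \<mu>)^2"
  define V' where "V' = wnorm_sq U u + \<alpha>/\<beta> * (norm \<mu>')^2"
  have ID: "V - V' = wnorm_sq U d + 2*\<alpha>*(u \<bullet> (B *v u)) + 2*\<alpha>*(g \<bullet> u) - \<alpha>*\<beta>*(norm (A *v u))^2"
    unfolding V_def V'_def U_def wn[of \<alpha> B e] wn[of \<alpha> B u]
    by (rule alg_id[OF _ F1 F2 F3[unfolded U_def]]) (use beta in simp)
  have s1: "0 < 1/\<alpha> - \<rho>B - L^2/\<eta>1"
  proof -
    have "\<alpha> * (L^2/\<eta>1 + \<rho>B) < \<alpha> * (1/\<alpha>)" using alpha by simp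
    then show ?thesis using alpha(1) by (simp only: mult_less_cancel_left_pos)
  qed
  have spos: "0 < s" unfolding s_def using s1 beta by simp
  \<comment> \<open>lower bound on V - V'\<close>
  have I1: "(norm d)^2 - \<alpha>*\<rho>B*(norm d)^2 \<le> wnorm_sq U d"
  proof -
    have "\<alpha> * (d \<bullet> (B *v d)) \<le> \<alpha> * (\<rho>B * (norm d)^2)" using hB[of d] alpha(1) by (simp add: mult_left_mono)
    then show ?thesis unfolding U_def wn by (simp add: power2_norm_eq_inner[symmetric] algebra_simps)
  qed
  have I2: "0 \<le> u \<bullet> (B *v u)" using B_psd unfolding psd_def by blast
  have coef: "\<exists>c. m \<le> c \<and> c \<le> L \<and> g$i = c * e$i" for i
    using mvt_coef[OF df_deriv d2f_bounds mL, of i "y$i" "xs$i"] unfolding g_def e_def grad_def by simp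
  have I3: "(2*m - \<eta>1) * (norm u)^2 - (L^2/\<eta>1) * (norm d)^2 \<le> 2 * (g \<bullet> u)"
  proof -
    have "(2*m - \<eta>1) * (u$i)^2 - (L^2/\<eta>1) * (d$i)^2 \<le> 2 * (u$i * g$i)" for i
    proof -
      obtain c where c: "m \<le> c" "c \<le> L" "g$i = c * e$i" using coef by blast
      have "e$i = u$i - d$i" unfolding d_def by simp
      then show ?thesis using scalar_key[OF c(1,2) eta, of "u$i" "d$i"] c(3) m_pos by simp
    qed
    then have "(\<Sum>i\<in>UNIV. (2*m - \<eta>1) * (u$i)^2 - (L^2/\<eta>1) * (d$i)^2) \<le> (\<Sum>i\<in>UNIV. 2 * (u$i * g$i))"
      by (rule sum_mono)
    then show ?thesis
      by (simp add: sum_sq_norm inner_sum[of g u] sum_subtractf sum_distrib_left[symmetric] sum_divide_distrib[symmetric] mult.commute)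
  qed
  have I4: "\<alpha>*\<beta>*(norm (A *v u))^2 \<le> \<alpha>*\<beta>*(\<rho>A * (norm u)^2)"
    using hA[of u] alpha(1) beta(1) by (simp add: mult_left_mono)
  define N where "N = (norm u)^2 + (norm d)^2"
  have low: "\<alpha> * s * N \<le> V - V'"
  proof -
    have c1: "s * (norm d)^2 \<le> (1/\<alpha> - \<rho>B - L^2/\<eta>1) * (norm d)^2"
      unfolding s_def by (rule mult_right_mono) auto
    have c2: "s * (norm u)^2 \<le> (2*m - \<eta>1 - \<beta>*\<rho>A) * (norm u)^2"
      unfolding s_def by (rule mult_right_mono) auto
    have "\<alpha> * s * N \<le> \<alpha> * ((1/\<alpha> - \<rho>B - L^2/\<eta>1) * (norm d)^2 + (2*m - \<eta>1 - \<beta>*\<rho>A) * (norm u)^2)"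
    proof -
      have "s * N \<le> (1/\<alpha> - \<rho>B - L^2/\<eta>1) * (norm d)^2 + (2*m - \<eta>1 - \<beta>*\<rho>A) * (norm u)^2"
        unfolding N_def using c1 c2 by (simp only: distrib_left)
      then have "\<alpha> * (s * N) \<le> \<alpha> * ((1/\<alpha> - \<rho>B - L^2/\<eta>1) * (norm d)^2 + (2*m - \<eta>1 - \<beta>*\<rho>A) * (norm u)^2)"
        by (rule mult_left_mono) (use alpha in simp)
      then show ?thesis by (simp only: mult.assoc)
    qed
    also have "\<dots> = (norm d)^2 - \<alpha>*\<rho>B*(norm d)^2 + \<alpha> * ((2*m - \<eta>1) * (norm u)^2 - (L^2/\<eta>1) * (norm d)^2) - \<alpha>*\<beta>*(\<rho>A * (norm u)^2)"
      using alpha(1) by (simp add: field_simps)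
    also have "\<dots> \<le> wnorm_sq U d + 2*\<alpha>*(u \<bullet> (B *v u)) + 2*\<alpha>*(g \<bullet> u) - \<alpha>*\<beta>*(norm (A *v u))^2"
    proof -
      have "\<alpha> * ((2*m - \<eta>1) * (norm u)^2 - (L^2/\<eta>1) * (norm d)^2) \<le> \<alpha> * (2 * (g \<bullet> u))"
        using I3 alpha(1) by (intro mult_left_mono) auto
      moreover have "0 \<le> \<alpha> * (u \<bullet> (B *v u))" using I2 alpha(1) by simp
      ultimately show ?thesis using I1 I4 by linarith
    qed
    finally show ?thesis using ID by simp
  qed
  \<comment> \<open>upper bound on V'\<close>
  have ng: "norm g \<le> L * norm e"
  proof -
    have gi: "(g$i)^2 \<le> L^2 * (e$i)^2" for i
    proof -
      obtain c where c: "m \<le> c" "c \<le> L" "g$i = c * e$i" using coef by blast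
      have "c^2 \<le> L^2" using c m_pos by (intro power_mono) auto
      moreover have "(g$i)^2 = c^2 * (e$i)^2" using c(3) by (simp add: power_mult_distrib)
      ultimately show ?thesis by (simp add: mult_right_mono)
    qed
    have "(\<Sum>i\<in>UNIV. (g$i)^2) \<le> (\<Sum>i\<in>UNIV. L^2 * (e$i)^2)"
      by (rule sum_mono) (rule gi)
    then have "(norm g)^2 \<le> L^2 * (norm e)^2"
      by (simp only: sum_sq_norm sum_distrib_left)
    then have "(norm g)^2 \<le> (L * norm e)^2" by (simp only: power_mult_distrib)
    then show ?thesis by (rule power2_le_imp_le) (use m_pos mL in auto)
  qed
  have ne: "norm e \<le> norm u + norm d"
  proof -
    have "e = u - d" unfolding d_def by simp
    then show ?thesis using norm_triangle_ineq4[of u d] by simp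
  qed
  have aAmu': "\<alpha> *\<^sub>R (transpose A *v \<mu>') = - d - \<alpha> *\<^sub>R (B *v e) - \<alpha> *\<^sub>R g + (\<alpha>*\<beta>) *\<^sub>R ((transpose A ** A) *v u)"
  proof -
    have "\<alpha> *\<^sub>R (transpose A *v \<mu>') = \<alpha> *\<^sub>R (transpose A *v \<mu>) + (\<alpha>*\<beta>) *\<^sub>R ((transpose A ** A) *v u)"
      unfolding mu_eq by (simp add: matrix_vector_right_distrib matrix_vector_mult_scaleR matrix_vector_mul_assoc scaleR_add_right)
    then show ?thesis unfolding aAmu .
  qed
  have nA: "\<alpha> * norm (transpose A *v \<mu>') \<le> M1 * (norm u + norm d)"
  proof -
    have "\<alpha> * norm (transpose A *v \<mu>') = norm (- d - \<alpha> *\<^sub>R (B *v e) - \<alpha> *\<^sub>R g + (\<alpha>*\<beta>) *\<^sub>R ((transpose A ** A) *v u))"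
      using alpha(1) by (simp add: aAmu'[symmetric])
    also have "\<dots> \<le> norm d + \<alpha> * norm (B *v e) + \<alpha> * norm g + \<alpha>*\<beta> * norm ((transpose A ** A) *v u)"
    proof -
      have t1: "norm (- d - \<alpha> *\<^sub>R (B *v e) - \<alpha> *\<^sub>R g + (\<alpha>*\<beta>) *\<^sub>R ((transpose A ** A) *v u))
          \<le> norm (- d - \<alpha> *\<^sub>R (B *v e) - \<alpha> *\<^sub>R g) + norm ((\<alpha>*\<beta>) *\<^sub>R ((transpose A ** A) *v u))"
        by (rule norm_triangle_ineq)
      have t2: "norm (- d - \<alpha> *\<^sub>R (B *v e) - \<alpha> *\<^sub>R g) \<le> norm (- d - \<alpha> *\<^sub>R (B *v e)) + norm (\<alpha> *\<^sub>R g)"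
        by (rule norm_triangle_ineq4)
      have t3: "norm (- d - \<alpha> *\<^sub>R (B *v e)) \<le> norm (- d) + norm (\<alpha> *\<^sub>R (B *v e))"
        by (rule norm_triangle_ineq4)
      have "norm ((\<alpha>*\<beta>) *\<^sub>R ((transpose A ** A) *v u)) = \<alpha>*\<beta> * norm ((transpose A ** A) *v u)"
        using alpha(1) beta(1) by simp
      moreover have "norm (\<alpha> *\<^sub>R g) = \<alpha> * norm g" using alpha(1) by simp
      moreover have "norm (\<alpha> *\<^sub>R (B *v e)) = \<alpha> * norm (B *v e)" using alpha(1) by simp
      ultimately show ?thesis using t1 t2 t3 norm_minus_cancel[of d] by linarith
    qed
    also have "\<dots> \<le> norm d + \<alpha> * (KB * norm e) + \<alpha> * (L * norm e) + \<alpha>*\<beta> * (KA * norm u)"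
      using KB[of e] KA[of u] ng alpha(1) beta(1)
      by (intro add_mono mult_left_mono) auto
    also have "\<dots> \<le> norm d + \<alpha> * (KB * (norm u + norm d)) + \<alpha> * (L * (norm u + norm d)) + \<alpha>*\<beta> * (KA * norm u)"
      using ne KBpos m_pos mL alpha(1) by (intro add_mono mult_left_mono order_refl) auto
    also have "\<dots> \<le> M1 * (norm u + norm d)"
    proof -
      have "0 \<le> \<alpha>*\<beta>*KA * norm d" using alpha(1) beta(1) KApos by simp
      moreover have "0 \<le> norm u" by simp
      ultimately show ?thesis unfolding M1_def by (simp add: algebra_simps)
    qed
    finally show ?thesis .
  qed
  have mu'_range: "\<mu>' \<in> range (\<lambda>y. A *v y)"
  proof -
    obtain z1 where z1: "lam = A *v z1" using lam by blast
    obtain z2 where z2: "ls = A *v z2" using ls by blast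
    have "\<mu>' = A *v (z1 + \<beta> *\<^sub>R x' - z2)"
      unfolding \<mu>'_def z1 z2 by (simp add: matrix_vector_right_distrib matrix_vector_mult_diff_distrib matrix_vector_mult_scaleR)
    then show ?thesis by blast
  qed
  have nmu: "\<alpha> * \<sigma> * norm \<mu>' \<le> M1 * (norm u + norm d)"
  proof -
    obtain z where z: "\<mu>' = A *v z" using mu'_range by blast
    have "\<sigma> * norm \<mu>' \<le> norm (transpose A *v \<mu>')" using sig[of z] z by simp
    then have "\<alpha> * (\<sigma> * norm \<mu>') \<le> \<alpha> * norm (transpose A *v \<mu>')" using alpha(1) by simp
    then show ?thesis using nA by (simp add: mult.assoc)
  qed
  have M1pos: "0 \<le> M1" unfolding M1_def using alpha(1) beta(1) KApos KBpos m_pos mL by simp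
  have nmu2: "(\<alpha> * \<sigma>)^2 * (norm \<mu>')^2 \<le> 2 * M1^2 * N"
  proof -
    have "(\<alpha> * \<sigma> * norm \<mu>')^2 \<le> (M1 * (norm u + norm d))^2"
      using nmu alpha(1) sigpos by (intro power_mono) auto
    also have "\<dots> \<le> 2 * M1^2 * N"
    proof -
      have "(norm u + norm d)^2 \<le> 2 * N" unfolding N_def
        using sum_squares_ge_zero[of "norm u - norm d" 0] by (simp add: power2_eq_square algebra_simps)
      then have "M1^2 * (norm u + norm d)^2 \<le> M1^2 * (2 * N)" by (rule mult_left_mono) simp
      then show ?thesis by (simp only: power_mult_distrib mult.assoc mult.left_commute[of "M1^2" 2])
    qed
    finally show ?thesis by (simp add: power_mult_distrib)
  qed
  define Mp where "Mp = 1 + 2 * M1^2 / (\<alpha>*\<beta>*\<sigma>^2)"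
  have Mppos: "0 < Mp" unfolding Mp_def using alpha(1) beta(1) sigpos by (simp add: add_pos_nonneg)
  have up: "V' \<le> Mp * N"
  proof -
    have "wnorm_sq U u \<le> (norm u)^2" unfolding U_def wn using I2 alpha(1) by (simp add: power2_norm_eq_inner)
    moreover have "\<alpha>/\<beta> * (norm \<mu>')^2 \<le> 2 * M1^2 / (\<alpha>*\<beta>*\<sigma>^2) * N"
    proof -
      have "\<alpha>/\<beta> * (norm \<mu>')^2 = ((\<alpha> * \<sigma>)^2 * (norm \<mu>')^2) / (\<alpha>*\<beta>*\<sigma>^2)"
        using alpha(1) beta(1) sigpos by (simp add: field_simps power2_eq_square)
      also have "\<dots> \<le> (2 * M1^2 * N) / (\<alpha>*\<beta>*\<sigma>^2)"
        using nmu2 alpha(1) beta(1) sigpos by (intro divide_right_mono) auto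
      finally show ?thesis by simp
    qed
    moreover have "Mp * N = N + 2 * M1^2 / (\<alpha>*\<beta>*\<sigma>^2) * N" unfolding Mp_def by (simp add: algebra_simps)
    moreover have "(norm u)^2 \<le> N" unfolding N_def by simp
    ultimately show ?thesis unfolding V'_def by linarith
  qed
  have \<delta>_eq2: "\<delta> = \<alpha> * s / Mp" unfolding \<delta>_eq Mp_def ..
  have \<delta>pos: "0 \<le> \<delta>" unfolding \<delta>_eq2 using alpha(1) spos Mppos by simp
  have "\<delta> * V' \<le> \<delta> * (Mp * N)" using up \<delta>pos by (rule mult_left_mono)
  also have "\<dots> = \<alpha> * s * N" unfolding \<delta>_eq2 using Mppos by simp
  finally have "(1 + \<delta>) * V' \<le> V" using low by (simp add: algebra_simps)
  then have "V' \<le> 1/(1+\<delta>) * V" using \<delta>pos by (simp add: field_simps)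
  then show ?thesis unfolding V'_def V_def U_def \<mu>'_def \<mu>_def u_def e_def x'_def .


qed

lemma sigma_exists:
  fixes A :: "real^'n^'e"
  shows "\<exists>\<sigma>>0. \<forall>z. \<sigma> * norm (A *v z) \<le> norm (transpose A *v (A *v z))"
proof -
  have sub: "subspace (range (\<lambda>z. A *v z))"
    by (rule linear_subspace_image) (auto intro: matrix_vector_mul_linear)
  have inj: "\<forall>x\<in>range (\<lambda>z. A *v z). transpose A *v x = 0 \<longrightarrow> x = 0"
  proof safe
    fix z assume h: "transpose A *v (A *v z) = 0"
    have "(norm (A *v z))^2 = z \<bullet> (transpose A *v (A *v z))"
      by (simp add: normA_sq matrix_vector_mul_assoc)
    then show "A *v z = 0" using h by simp
  qed
  obtain \<sigma> where "\<sigma> > 0" "\<forall>x\<in>range (\<lambda>z. A *v z). norm (transpose A *v x) \<ge> \<sigma> * norm x"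
    using injective_imp_isometric[OF closed_subspace[OF sub] sub matrix_vector_mul_bounded_linear inj] by blast
  then show ?thesis by auto
qed

theorem theorem3p6:
  fixes src dst :: "'e::finite \<Rightarrow> 'n::finite"
    and f df d2f :: "'n \<Rightarrow> real \<Rightarrow> real"
    and m L \<alpha> \<beta> \<eta>1 :: real and T :: nat
    and A :: "real^'n^'e" and B :: "real^'n^'n"
    and xs x0 :: "real^'n" and ls :: "real^'e"
  assumes graph: "simple_connected_graph src dst"
    and A_def: "A = incidence_matrix src dst"
    and f_deriv: "\<And>i t. (f i has_real_derivative df i t) (at t)"
    and df_deriv: "\<And>i t. (df i has_real_derivative d2f i t) (at t)"
    and m_pos: "0 < m" and mL: "m \<le> L"
    and d2f_bounds: "\<And>i t. m \<le> d2f i t \<and> d2f i t \<le> L"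
    and B_sym: "transpose B = B" and B_psd: "psd B"
    and B_null: "{v. B *v v = 0} = {v. A *v v = 0}"
    and B_sparse: "\<And>i j. i \<noteq> j \<Longrightarrow> B $ i $ j \<noteq> 0 \<Longrightarrow> adjacent src dst i j"
    and xs_feas: "A *v xs = 0"
    and xs_min: "\<And>x. A *v x = 0 \<Longrightarrow> (\<Sum>i\<in>UNIV. f i (xs $ i)) \<le> (\<Sum>i\<in>UNIV. f i (x $ i))"
    and KKT: "grad df xs + transpose A *v ls = 0"
    and B_xs: "B *v xs = 0"
    and ls_range: "ls \<in> range (\<lambda>y. A *v y)"
    and T_ge: "T \<ge> 1"
    and eta: "0 < \<eta>1" "\<eta>1 < 2 * m"
    and alpha: "0 < \<alpha>" "\<alpha> < 1 / (L\<^sup>2 / \<eta>1 + largest_eig B)"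
    and beta: "0 < \<beta>" "\<beta> < (2 * m - \<eta>1) / largest_eig (transpose A ** A)"
  shows "\<exists>\<delta>>0. \<forall>k.
     wnorm_sq (mat 1 - \<alpha> *\<^sub>R B) (flexpd_inner \<alpha> \<beta> T B df A x0 k T - xs)
       + \<alpha> / \<beta> * (norm (snd (flexpd \<alpha> \<beta> T B df A x0 (Suc k)) - ls))\<^sup>2
     \<le> 1 / (1 + \<delta>) *
       (wnorm_sq (mat 1 - \<alpha> *\<^sub>R B) (flexpd_inner \<alpha> \<beta> T B df A x0 k (T - 1) - xs)
        + \<alpha> / \<beta> * (norm (snd (flexpd \<alpha> \<beta> T B df A x0 k) - ls))\<^sup>2)"
proof -
  define \<rho>B where "\<rho>B = largest_eig B"
  define \<rho>A where "\<rho>A = largest_eig (transpose A ** A)"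
  have hB: "\<And>v. v \<bullet> (B *v v) \<le> \<rho>B * (norm v)^2"
    unfolding \<rho>B_def by (rule largest_eig_bound[OF B_sym])
  have symA: "transpose (transpose A ** A) = transpose A ** A"
    by (simp add: matrix_transpose_mul)
  have hA: "\<And>v. (norm (A *v v))^2 \<le> \<rho>A * (norm v)^2"
    unfolding \<rho>A_def normA_sq by (rule largest_eig_bound[OF symA])
  have alpha2: "\<alpha> * (L^2/\<eta>1 + \<rho>B) < 1"
  proof -
    have D: "0 < L^2/\<eta>1 + \<rho>B"
    proof (rule ccontr)
      assume "\<not> ?thesis"
      then have "1 / (L^2/\<eta>1 + \<rho>B) \<le> 0" by simp
      moreover have "\<alpha> < 1 / (L^2/\<eta>1 + \<rho>B)" using alpha(2) unfolding \<rho>B_def .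
      ultimately show False using alpha(1) by linarith
    qed
    then show ?thesis using alpha(2) unfolding \<rho>B_def[symmetric] by (simp add: field_simps)
  qed
  have beta2: "\<beta> * \<rho>A < 2*m - \<eta>1"
  proof -
    have X: "0 < 2*m - \<eta>1" using eta by simp
    have P: "0 < \<rho>A"
    proof (rule ccontr)
      assume "\<not> ?thesis"
      then have "(2*m - \<eta>1) / \<rho>A \<le> 0" using X by (simp add: divide_nonneg_nonpos less_imp_le)
      moreover have "\<beta> < (2*m - \<eta>1) / \<rho>A" using beta(2) unfolding \<rho>A_def .
      ultimately show False using beta(1) by linarith
    qed
    then show ?thesis using beta(2) unfolding \<rho>A_def[symmetric] by (simp add: field_simps)
  qed
  obtain KB where KB: "KB > 0" "\<And>v. norm (B *v v) \<le> KB * norm v"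
    using linear_bounded_pos[OF matrix_vector_mul_linear[of B]] by blast
  obtain KA where KA: "KA > 0" "\<And>v. norm ((transpose A ** A) *v v) \<le> KA * norm v"
    using linear_bounded_pos[OF matrix_vector_mul_linear[of "transpose A ** A"]] by blast
  obtain \<sigma> where sig: "\<sigma> > 0" "\<And>z. \<sigma> * norm (A *v z) \<le> norm (transpose A *v (A *v z))"
    using sigma_exists[of A] by blast
  have lamr: "snd (flexpd \<alpha> \<beta> T B df A x0 k) \<in> range (\<lambda>y. A *v y)" for k
  proof (induction k)
    case 0
    then show ?case by (auto intro!: range_eqI[of _ _ 0])
  next
    case (Suc k)
    then obtain z where z: "snd (flexpd \<alpha> \<beta> T B df A x0 k) = A *v z" by blast
    show ?case
      by (rule range_eqI[of _ _ "z + \<beta> *\<^sub>R (inner_step \<alpha> B df A (snd (flexpd \<alpha> \<beta> T B df A x0 k)) ^^ T) (fst (flexpd \<alpha> \<beta> T B df A x0 k))"])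
         (simp add: Let_def z matrix_vector_right_distrib matrix_vector_mult_scaleR)
  qed
  define s where "s = min (1/\<alpha> - \<rho>B - L^2/\<eta>1) (2*m - \<eta>1 - \<beta>*\<rho>A)"
  define \<delta> where "\<delta> = \<alpha> * min (1/\<alpha> - \<rho>B - L^2/\<eta>1) (2*m - \<eta>1 - \<beta>*\<rho>A) / (1 + 2 * (1 + \<alpha>*KB + \<alpha>*L + \<alpha>*\<beta>*KA)^2 / (\<alpha>*\<beta>*\<sigma>^2))"
  have s1: "0 < 1/\<alpha> - \<rho>B - L^2/\<eta>1"
  proof -
    have "\<alpha> * (L^2/\<eta>1 + \<rho>B) < \<alpha> * (1/\<alpha>)" using alpha alpha2 by simp
    then show ?thesis using alpha(1) by (simp only: mult_less_cancel_left_pos)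
  qed
  have dpos: "0 < \<delta>" unfolding \<delta>_def using s1 beta2 alpha(1) beta(1) sig(1)
    by (intro divide_pos_pos mult_pos_pos add_pos_nonneg) auto
  show ?thesis
  proof (intro exI[of _ \<delta>] conjI allI dpos)
    fix k
    define lam where "lam = snd (flexpd \<alpha> \<beta> T B df A x0 k)"
    define y where "y = flexpd_inner \<alpha> \<beta> T B df A x0 k (T - 1)"
    have T: "T = Suc (T - 1)" using T_ge by simp
    have e1: "flexpd_inner \<alpha> \<beta> T B df A x0 k T = inner_step \<alpha> B df A lam y"
      unfolding y_def lam_def flexpd_inner_def by (subst T) simp
    have e2: "snd (flexpd \<alpha> \<beta> T B df A x0 (Suc k)) = lam + \<beta> *\<^sub>R (A *v inner_step \<alpha> B df A lam y)"
    proof -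
      have "snd (flexpd \<alpha> \<beta> T B df A x0 (Suc k)) = lam + \<beta> *\<^sub>R (A *v flexpd_inner \<alpha> \<beta> T B df A x0 k T)"
        unfolding lam_def by (simp add: Let_def flexpd_inner_def)
      then show ?thesis unfolding e1 .
    qed
    show "wnorm_sq (mat 1 - \<alpha> *\<^sub>R B) (flexpd_inner \<alpha> \<beta> T B df A x0 k T - xs)
       + \<alpha> / \<beta> * (norm (snd (flexpd \<alpha> \<beta> T B df A x0 (Suc k)) - ls))\<^sup>2
     \<le> 1 / (1 + \<delta>) *
       (wnorm_sq (mat 1 - \<alpha> *\<^sub>R B) (flexpd_inner \<alpha> \<beta> T B df A x0 k (T - 1) - xs)
        + \<alpha> / \<beta> * (norm (snd (flexpd \<alpha> \<beta> T B df A x0 k) - ls))\<^sup>2)"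
      unfolding e1 e2 y_def[symmetric] lam_def[symmetric] \<delta>_def
      by (rule step[OF df_deriv d2f_bounds m_pos mL B_sym B_psd hB hA KB(2) _ KA(2) _ sig(2) sig(1) eta(1)
            alpha(1) alpha2 beta(1) beta2 KKT B_xs xs_feas _ ls_range])
         (use KB(1) KA(1) lamr lam_def in auto)
  qed
qed

end
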